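(* Let $N\ge 1$, let $0\le\epsilon<1/2$, and let $H_N=\sum_{k=1}^N\frac1k$. Any comparison-based quantum algorithm for element distinctness on $N$ numbers (in the model described in the context) that errs with probability at most $\epsilon$ uses at least $$\Big(1-2\sqrt{\epsilon(1-\epsilon)}\Big)\frac{\sqrt{N}}{2\pi}(H_N-1)$$ comparisons.
   Context: Element distinctness problem: given a list $x=(x_0,\dots,x_{N-1})$ of numbers, decide whether the $x_i$ are pairwise distinct. Comparison-based quantum model: the algorithm acts on a Hilbert space with orthonormal basis $\{|z;i,i'\rangle\}$ ($z,i,i'$ non-negative integers); the input is accessible only through the comparison oracle $O_x|z;i,i'\rangle=(-1)^{m_{ii'}}|z;i,i'\rangle$, where for $0\le i,i'<N$, $m_{ii'}=1$ if $x_i<x_{i'}$ and $m_{ii'}=0$ otherwise (one application of $O_x$ is one comparison). An algorithm using $T$ comparisons is a unitary $(U O_x)^T U$ with $U$ a fixed unitary independent of $x$, applied to $|0\rangle$, followed by a measurement in the computational basis and reading of an output bit. It errs with probability at most $\epsilon$ if for every input list the output is the correct answer with probability at least $1-\epsilon$. *)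

theory Defs
  imports "HOL-Analysis.Analysis"
begin

text \<open>Computational basis labels |z;i,i'> are triples of naturals (z, i, i').
  A state is a complex-valued function on labels; the Hilbert space is l2 of labels.\<close>

type_synonym label = "nat \<times> nat \<times> nat"
type_synonym qstate = "label \<Rightarrow> complex"

definition sq_summable :: "qstate \<Rightarrow> bool" where
  "sq_summable \<psi> \<longleftrightarrow> (\<lambda>k. (cmod (\<psi> k))\<^sup>2) summable_on UNIV"

definition norm2 :: "qstate \<Rightarrow> real" where
  "norm2 \<psi> = infsum (\<lambda>k. (cmod (\<psi> k))\<^sup>2) UNIV"

definition unitary_op :: "(qstate \<Rightarrow> qstate) \<Rightarrow> bool" where
  "unitary_op U \<longleftrightarrow>
     (\<forall>\<psi>. sq_summable \<psi> \<longrightarrow> sq_summable (U \<psi>)) \<and>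
     (\<forall>\<psi> \<phi> (a::complex) (b::complex). sq_summable \<psi> \<longrightarrow> sq_summable \<phi> \<longrightarrow>
         U (\<lambda>k. a * \<psi> k + b * \<phi> k) = (\<lambda>k. a * U \<psi> k + b * U \<phi> k)) \<and>
     (\<forall>\<psi>. sq_summable \<psi> \<longrightarrow> norm2 (U \<psi>) = norm2 \<psi>) \<and>
     (\<forall>\<phi>. sq_summable \<phi> \<longrightarrow> (\<exists>\<psi>. sq_summable \<psi> \<and> U \<psi> = \<phi>))"

definition ket0 :: qstate where
  "ket0 = (\<lambda>k. if k = (0, 0, 0) then 1 else 0)"

definition cmp_oracle :: "nat \<Rightarrow> (nat \<Rightarrow> real) \<Rightarrow> qstate \<Rightarrow> qstate" where
  "cmp_oracle N x \<psi> = (\<lambda>(z, i, i').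
      if i < N \<and> i' < N \<and> x i < x i' then - \<psi> (z, i, i') else \<psi> (z, i, i'))"

definition final_state :: "(qstate \<Rightarrow> qstate) \<Rightarrow> nat \<Rightarrow> nat \<Rightarrow> (nat \<Rightarrow> real) \<Rightarrow> qstate" where
  "final_state U T N x = ((\<lambda>\<psi>. U (cmp_oracle N x \<psi>)) ^^ T) (U ket0)"

definition prob_output :: "(label \<Rightarrow> bool) \<Rightarrow> qstate \<Rightarrow> bool \<Rightarrow> real" where
  "prob_output out \<psi> b = infsum (\<lambda>k. if out k = b then (cmod (\<psi> k))\<^sup>2 else 0) UNIV"

definition all_distinct :: "nat \<Rightarrow> (nat \<Rightarrow> real) \<Rightarrow> bool" where
  "all_distinct N x \<longleftrightarrow> inj_on x {..<N}"

definition ED_algorithm :: "nat \<Rightarrow> real \<Rightarrow> (qstate \<Rightarrow> qstate) \<Rightarrow> (label \<Rightarrow> bool) \<Rightarrow> nat \<Rightarrow> bool" where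
  "ED_algorithm N \<epsilon> U out T \<longleftrightarrow> unitary_op U \<and>
     (\<forall>x. prob_output out (final_state U T N x) (all_distinct N x) \<ge> 1 - \<epsilon>)"

end

theory Submission
  imports Defs "HOL-Combinatorics.Permutations"
begin


section \<open>Generic infinite sum facts\<close>

lemma summable_on_sum_fin:
  fixes f :: "'i \<Rightarrow> 'a \<Rightarrow> real"
  assumes "finite I" "\<And>i. i \<in> I \<Longrightarrow> f i summable_on A"
  shows "(\<lambda>k. \<Sum>i\<in>I. f i k) summable_on A"
  using assms by (induction I rule: finite_induct) (auto intro: summable_on_add)

lemma infsum_sum_fin:
  fixes f :: "'i \<Rightarrow> 'a \<Rightarrow> real"
  assumes "finite I" "\<And>i. i \<in> I \<Longrightarrow> f i summable_on A"
  shows "infsum (\<lambda>k. \<Sum>i\<in>I. f i k) A = (\<Sum>i\<in>I. infsum (f i) A)"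
  using assms
proof (induction I rule: finite_induct)
  case empty
  then show ?case by simp
next
  case (insert x F)
  have "infsum (\<lambda>k. \<Sum>i\<in>insert x F. f i k) A = infsum (\<lambda>k. f x k + (\<Sum>i\<in>F. f i k)) A"
    using insert by simp
  also have "\<dots> = infsum (f x) A + infsum (\<lambda>k. \<Sum>i\<in>F. f i k) A"
    by (rule infsum_add) (use insert in \<open>auto intro: summable_on_sum_fin\<close>)
  finally show ?case using insert by simp
qed

lemma summable_cmp:
  fixes f g :: "'a \<Rightarrow> real"
  assumes "f summable_on A" "\<And>x. x \<in> A \<Longrightarrow> g x \<le> f x" "\<And>x. x \<in> A \<Longrightarrow> 0 \<le> g x"
  shows "g summable_on A"
  using summable_on_comparison_test[OF assms] .

lemma infsum_CS:
  fixes f g :: "'a \<Rightarrow> real"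
  assumes f0: "\<And>k. 0 \<le> f k" and g0: "\<And>k. 0 \<le> g k"
    and fs: "(\<lambda>k. (f k)\<^sup>2) summable_on UNIV" and gs: "(\<lambda>k. (g k)\<^sup>2) summable_on UNIV"
  shows "(\<lambda>k. f k * g k) summable_on UNIV"
    and "infsum (\<lambda>k. f k * g k) UNIV \<le> sqrt (infsum (\<lambda>k. (f k)\<^sup>2) UNIV) * sqrt (infsum (\<lambda>k. (g k)\<^sup>2) UNIV)"
proof -
  have fgs: "(\<lambda>k. ((f k)\<^sup>2 + (g k)\<^sup>2) / 2) summable_on UNIV"
    using summable_on_cmult_right[OF summable_on_add[OF fs gs], of "1/2"] by (simp add: field_simps)
  show S: "(\<lambda>k. f k * g k) summable_on UNIV"
  proof (rule summable_cmp[OF fgs])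
    fix k
    show "f k * g k \<le> ((f k)\<^sup>2 + (g k)\<^sup>2) / 2" proof -
      have "0 \<le> (f k - g k)\<^sup>2" by simp
      then show ?thesis by (simp add: power2_diff field_simps)
    qed
    show "0 \<le> f k * g k" using f0 g0 by simp
  qed
  show "infsum (\<lambda>k. f k * g k) UNIV \<le> sqrt (infsum (\<lambda>k. (f k)\<^sup>2) UNIV) * sqrt (infsum (\<lambda>k. (g k)\<^sup>2) UNIV)"
  proof (rule infsum_le_finite_sums[OF S])
    fix F :: "'a set" assume F: "finite F"
    have 1: "(\<Sum>k\<in>F. f k * g k)\<^sup>2 \<le> (\<Sum>k\<in>F. (f k)\<^sup>2) * (\<Sum>k\<in>F. (g k)\<^sup>2)"
      by (rule Cauchy_Schwarz_ineq_sum)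
    have 2: "(\<Sum>k\<in>F. f k * g k) \<le> sqrt (\<Sum>k\<in>F. (f k)\<^sup>2) * sqrt (\<Sum>k\<in>F. (g k)\<^sup>2)"
      using real_le_rsqrt[OF 1] by (simp add: real_sqrt_mult)
    have 3: "(\<Sum>k\<in>F. (f k)\<^sup>2) \<le> infsum (\<lambda>k. (f k)\<^sup>2) UNIV"
      using infsum_mono_neutral[of "\<lambda>k. (f k)\<^sup>2" F "\<lambda>k. (f k)\<^sup>2" UNIV] F fs by simp
    have 4: "(\<Sum>k\<in>F. (g k)\<^sup>2) \<le> infsum (\<lambda>k. (g k)\<^sup>2) UNIV"
      using infsum_mono_neutral[of "\<lambda>k. (g k)\<^sup>2" F "\<lambda>k. (g k)\<^sup>2" UNIV] F gs by simp
    show "(\<Sum>k\<in>F. f k * g k) \<le> sqrt (infsum (\<lambda>k. (f k)\<^sup>2) UNIV) * sqrt (infsum (\<lambda>k. (g k)\<^sup>2) UNIV)"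
      proof -
      have "sqrt (\<Sum>k\<in>F. (f k)\<^sup>2) * sqrt (\<Sum>k\<in>F. (g k)\<^sup>2) \<le> sqrt (infsum (\<lambda>k. (f k)\<^sup>2) UNIV) * sqrt (infsum (\<lambda>k. (g k)\<^sup>2) UNIV)"
        by (intro mult_mono real_sqrt_le_mono 3 4) (auto intro: infsum_nonneg sum_nonneg)
      with 2 show ?thesis by linarith
    qed
  qed
qed

lemma sq_summable_diff:
  assumes "sq_summable \<psi>" "sq_summable \<phi>"
  shows "sq_summable (\<lambda>k. \<psi> k - \<phi> k)"
  unfolding sq_summable_def
proof (rule summable_cmp)
  show "(\<lambda>k. 2 * (cmod (\<psi> k))\<^sup>2 + 2 * (cmod (\<phi> k))\<^sup>2) summable_on UNIV"
    using assms unfolding sq_summable_def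
    by (intro summable_on_add summable_on_cmult_right)
  fix k
  have "cmod (\<psi> k - \<phi> k) \<le> cmod (\<psi> k) + cmod (\<phi> k)" by (rule norm_triangle_ineq4)
  then have "(cmod (\<psi> k - \<phi> k))\<^sup>2 \<le> (cmod (\<psi> k) + cmod (\<phi> k))\<^sup>2"
    by (simp add: power_mono)
  also have "\<dots> \<le> 2 * (cmod (\<psi> k))\<^sup>2 + 2 * (cmod (\<phi> k))\<^sup>2"
    using sum_squares_bound[of "cmod (\<psi> k)" "cmod (\<phi> k)"] by (simp add: power2_sum)
  finally show "(cmod (\<psi> k - \<phi> k))\<^sup>2 \<le> 2 * (cmod (\<psi> k))\<^sup>2 + 2 * (cmod (\<phi> k))\<^sup>2" .
qed simp


lemma sq_summable_mult:
  assumes "sq_summable \<psi>" "\<And>k. 0 \<le> c k" "\<And>k. c k \<le> C"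
  shows "(\<lambda>k. (cmod (\<psi> k))\<^sup>2 * c k) summable_on UNIV"
proof (rule summable_cmp)
  show "(\<lambda>k. C * (cmod (\<psi> k))\<^sup>2) summable_on UNIV"
    using assms unfolding sq_summable_def by (intro summable_on_cmult_right)
  fix k show "(cmod (\<psi> k))\<^sup>2 * c k \<le> C * (cmod (\<psi> k))\<^sup>2"
    using assms(2,3)[of k] by (simp add: mult_right_mono mult.commute)
  show "0 \<le> (cmod (\<psi> k))\<^sup>2 * c k" using assms(2)[of k] by simp
qed

lemma ket0_ok: "sq_summable ket0" "norm2 ket0 = 1"
proof -
  have e: "\<And>k. (cmod (ket0 k))\<^sup>2 = (if k = (0,0,0) then 1 else 0)"
    by (simp add: ket0_def)
  have "infsum (\<lambda>k. (cmod (ket0 k))\<^sup>2) UNIV = infsum (\<lambda>k. (cmod (ket0 k))\<^sup>2) {(0,0,0)}"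
    by (rule infsum_cong_neutral) (auto simp: e)
  then show "norm2 ket0 = 1" unfolding norm2_def by (simp add: e)
  have "(\<lambda>k. (cmod (ket0 k))\<^sup>2) summable_on UNIV \<longleftrightarrow> (\<lambda>k. (cmod (ket0 k))\<^sup>2) summable_on {(0,0,0)}"
    by (rule summable_on_cong_neutral) (auto simp: e)
  then show "sq_summable ket0" unfolding sq_summable_def by simp
qed

definition cnd :: "nat \<Rightarrow> (nat \<Rightarrow> real) \<Rightarrow> label \<Rightarrow> bool" where
  "cnd N x k = (case k of (z, i, i') \<Rightarrow> i < N \<and> i' < N \<and> x i < x i')"

lemma cmp_oracle_alt: "cmp_oracle N x \<psi> k = (if cnd N x k then - \<psi> k else \<psi> k)"
  by (cases k) (simp add: cmp_oracle_def cnd_def)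

lemma cmod_oracle[simp]: "cmod (cmp_oracle N x \<psi> k) = cmod (\<psi> k)"
  by (simp add: cmp_oracle_alt)

lemma oracle_ok:
  assumes "sq_summable \<psi>"
  shows "sq_summable (cmp_oracle N x \<psi>)" "norm2 (cmp_oracle N x \<psi>) = norm2 \<psi>"
  using assms by (simp_all add: sq_summable_def norm2_def)

definition st :: "(qstate \<Rightarrow> qstate) \<Rightarrow> nat \<Rightarrow> (nat \<Rightarrow> real) \<Rightarrow> nat \<Rightarrow> qstate" where
  "st U N x t = ((\<lambda>\<psi>. U (cmp_oracle N x \<psi>)) ^^ t) (U ket0)"

lemma st_0: "st U N x 0 = U ket0" by (simp add: st_def)
lemma st_Suc: "st U N x (Suc t) = U (cmp_oracle N x (st U N x t))" by (simp add: st_def)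

lemma st_ok:
  assumes "unitary_op U"
  shows "sq_summable (st U N x t) \<and> norm2 (st U N x t) = 1"
proof (induction t)
  case 0
  then show ?case using assms ket0_ok unfolding unitary_op_def by (simp add: st_0)
next
  case (Suc t)
  then show ?case using assms oracle_ok[of "st U N x t" N x] unfolding unitary_op_def by (simp add: st_Suc)
qed

lemma unitary_diff:
  assumes "unitary_op U" "sq_summable \<psi>" "sq_summable \<phi>"
  shows "norm2 (\<lambda>k. U \<psi> k - U \<phi> k) = norm2 (\<lambda>k. \<psi> k - \<phi> k)"
proof -
  have "U (\<lambda>k. 1 * \<psi> k + (-1) * \<phi> k) = (\<lambda>k. 1 * U \<psi> k + (-1) * U \<phi> k)"
  proof -
    have "\<forall>\<psi> \<phi> (a::complex) (b::complex). sq_summable \<psi> \<longrightarrow> sq_summable \<phi> \<longrightarrow>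
         U (\<lambda>k. a * \<psi> k + b * \<phi> k) = (\<lambda>k. a * U \<psi> k + b * U \<phi> k)" using assms(1) unfolding unitary_op_def by (elim conjE)
    then show ?thesis using assms(2,3) by blast
  qed
  then have "U (\<lambda>k. \<psi> k - \<phi> k) = (\<lambda>k. U \<psi> k - U \<phi> k)" by simp
  moreover have "norm2 (U (\<lambda>k. \<psi> k - \<phi> k)) = norm2 (\<lambda>k. \<psi> k - \<phi> k)"
  proof -
    have "\<forall>\<psi>. sq_summable \<psi> \<longrightarrow> norm2 (U \<psi>) = norm2 \<psi>" using assms(1) unfolding unitary_op_def by (elim conjE)
    then show ?thesis using sq_summable_diff[OF assms(2,3)] by blast
  qed
  ultimately show ?thesis by simp
qed



lemma prod_summable:
  assumes "sq_summable \<psi>" "sq_summable \<phi>"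
  shows "(\<lambda>k. if P k then cmod (\<psi> k) * cmod (\<phi> k) else 0) summable_on UNIV"
proof (rule summable_cmp)
  show "(\<lambda>k. (cmod (\<psi> k))\<^sup>2 + (cmod (\<phi> k))\<^sup>2) summable_on UNIV"
    using assms unfolding sq_summable_def by (intro summable_on_add)
  fix k
  have "0 \<le> (cmod (\<psi> k) - cmod (\<phi> k))\<^sup>2" by simp
  moreover have "(cmod (\<psi> k) - cmod (\<phi> k))\<^sup>2 = (cmod (\<psi> k))\<^sup>2 + (cmod (\<phi> k))\<^sup>2 - 2 * cmod (\<psi> k) * cmod (\<phi> k)"
    by (simp add: power2_diff)
  moreover have "0 \<le> cmod (\<psi> k) * cmod (\<phi> k)" by simp
  ultimately have "cmod (\<psi> k) * cmod (\<phi> k) \<le> (cmod (\<psi> k))\<^sup>2 + (cmod (\<phi> k))\<^sup>2"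
    by linarith
  then show "(if P k then cmod (\<psi> k) * cmod (\<phi> k) else 0) \<le> (cmod (\<psi> k))\<^sup>2 + (cmod (\<phi> k))\<^sup>2"
    by auto
  show "0 \<le> (if P k then cmod (\<psi> k) * cmod (\<phi> k) else 0)" by auto
qed

lemma sq_summable_restr':
  assumes "sq_summable \<psi>"
  shows "(\<lambda>k. if P k then (cmod (\<psi> k))\<^sup>2 else 0) summable_on UNIV"
proof (rule summable_cmp)
  show "(\<lambda>k. (cmod (\<psi> k))\<^sup>2) summable_on UNIV" using assms unfolding sq_summable_def .
qed auto

lemma pt_step:
  fixes a b :: complex
  shows "(cmod ((if p then - a else a) - (if q then - b else b)))\<^sup>2
     \<le> (cmod (a - b))\<^sup>2 + 4 * (if p \<noteq> q then cmod a * cmod b else 0)"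
proof (cases "p = q")
  case True
  have "(if p then - a else a) - (if q then - b else b) = (if p then - (a - b) else a - b)"
    using True by auto
  then show ?thesis by (simp only:) (simp add: norm_minus_commute)
next
  case False
  have e: "cmod ((if p then - a else a) - (if q then - b else b)) = cmod (a + b)"
  proof (cases p)
    case True
    then have "(if p then - a else a) - (if q then - b else b) = - (a + b)" using False by auto
    then show ?thesis by (simp only: norm_minus_cancel)
  next
    case f: False
    then have "(if p then - a else a) - (if q then - b else b) = a + b" using False by auto
    then show ?thesis by simp
  qed
  have 1: "cmod (a + b) \<le> cmod a + cmod b" by (rule norm_triangle_ineq)
  have 2: "\<bar>cmod a - cmod b\<bar> \<le> cmod (a - b)" by (rule norm_triangle_ineq3)
  have h1: "(cmod (a + b))\<^sup>2 \<le> (cmod a + cmod b)\<^sup>2" using 1 by (simp add: power_mono)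
  have h2: "(cmod a - cmod b)\<^sup>2 \<le> (cmod (a - b))\<^sup>2"
    using 2 by (metis abs_ge_zero power2_abs power_mono)
  have 3: "(cmod a + cmod b)\<^sup>2 = (cmod a - cmod b)\<^sup>2 + 4 * (cmod a * cmod b)"
    by (simp add: power2_sum power2_diff)
  show ?thesis using e h1 h2 3 False by simp
qed

definition Delta :: "(qstate \<Rightarrow> qstate) \<Rightarrow> nat \<Rightarrow> (nat \<Rightarrow> real) \<Rightarrow> (nat \<Rightarrow> real) \<Rightarrow> nat \<Rightarrow> real" where
  "Delta U N x y t = infsum (\<lambda>k. if cnd N x k \<noteq> cnd N y k then cmod (st U N x t k) * cmod (st U N y t k) else 0) UNIV"

lemma dist_step:
  assumes U: "unitary_op U"
  shows "norm2 (\<lambda>k. st U N x (Suc t) k - st U N y (Suc t) k)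
     \<le> norm2 (\<lambda>k. st U N x t k - st U N y t k) + 4 * Delta U N x y t"
proof -
  let ?a = "st U N x t" and ?b = "st U N y t"
  have sa: "sq_summable ?a" and sb: "sq_summable ?b" using st_ok[OF U] by auto
  have "norm2 (\<lambda>k. st U N x (Suc t) k - st U N y (Suc t) k)
      = norm2 (\<lambda>k. cmp_oracle N x ?a k - cmp_oracle N y ?b k)"
    unfolding st_Suc by (rule unitary_diff[OF U oracle_ok(1)[OF sa] oracle_ok(1)[OF sb]])
  also have "\<dots> \<le> infsum (\<lambda>k. (cmod (?a k - ?b k))\<^sup>2 + 4 * (if cnd N x k \<noteq> cnd N y k then cmod (?a k) * cmod (?b k) else 0)) UNIV"
    unfolding norm2_def
  proof (rule infsum_mono)
    show "(\<lambda>k. (cmod (cmp_oracle N x ?a k - cmp_oracle N y ?b k))\<^sup>2) summable_on UNIV"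
      using sq_summable_diff[OF oracle_ok(1)[OF sa] oracle_ok(1)[OF sb]] unfolding sq_summable_def .
    show "(\<lambda>k. (cmod (?a k - ?b k))\<^sup>2 + 4 * (if cnd N x k \<noteq> cnd N y k then cmod (?a k) * cmod (?b k) else 0)) summable_on UNIV"
      using sq_summable_diff[OF sa sb] prod_summable[OF sa sb] unfolding sq_summable_def
      by (intro summable_on_add summable_on_cmult_right)
    fix k show "(cmod (cmp_oracle N x ?a k - cmp_oracle N y ?b k))\<^sup>2 \<le> (cmod (?a k - ?b k))\<^sup>2 + 4 * (if cnd N x k \<noteq> cnd N y k then cmod (?a k) * cmod (?b k) else 0)"
      unfolding cmp_oracle_alt by (rule pt_step)
  qed
  also have "\<dots> = norm2 (\<lambda>k. ?a k - ?b k) + 4 * Delta U N x y t"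
    unfolding norm2_def Delta_def
    using sq_summable_diff[OF sa sb] prod_summable[OF sa sb] unfolding sq_summable_def
    by (subst infsum_add) (auto intro: summable_on_cmult_right simp: infsum_cmult_right)
  finally show ?thesis .
qed

lemma dist_bound:
  assumes U: "unitary_op U"
  shows "norm2 (\<lambda>k. st U N x T k - st U N y T k) \<le> 4 * (\<Sum>t<T. Delta U N x y t)"
proof (induction T)
  case 0
  then show ?case by (simp add: st_0 norm2_def)
next
  case (Suc T)
  then show ?case using dist_step[OF U, of N x T y] by (simp add: algebra_simps)
qed

lemma fid_real:
  fixes P Pc Q Qc e :: real
  assumes "0 \<le> P" "0 \<le> Pc" "0 \<le> Q" "0 \<le> Qc" "P + Pc = 1" "Q + Qc = 1"
    "1 - e \<le> P" "1 - e \<le> Qc" "0 \<le> e" "e < 1/2"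
  shows "sqrt P * sqrt Q + sqrt Pc * sqrt Qc \<le> 2 * sqrt (e * (1 - e))"
proof -
  define a a' b b' where "a = sqrt P" "a' = sqrt Pc" "b = sqrt Q" "b' = sqrt Qc"
  have sq: "a\<^sup>2 = P" "a'\<^sup>2 = Pc" "b\<^sup>2 = Q" "b'\<^sup>2 = Qc" by (simp_all add: a_a'_b_b'_def assms(1-4))
  have nn: "0 \<le> a" "0 \<le> a'" "0 \<le> b" "0 \<le> b'" by (simp_all add: a_a'_b_b'_def assms(1-4))
  define F D where "F = a * b + a' * b'" "D = a * b' - a' * b"
  have id: "F\<^sup>2 + D\<^sup>2 = (a\<^sup>2 + a'\<^sup>2) * (b\<^sup>2 + b'\<^sup>2)" unfolding F_D_def by (simp add: power2_eq_square algebra_simps)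
  then have id1: "F\<^sup>2 + D\<^sup>2 = 1" using sq assms by simp
  have "a * b' = sqrt (P * Qc)" by (simp add: a_a'_b_b'_def real_sqrt_mult)
  also have "\<dots> \<ge> sqrt ((1 - e) * (1 - e))"
    using assms by (intro real_sqrt_le_mono mult_mono) auto
  finally have ab': "a * b' \<ge> 1 - e" using assms by simp
  have "a' * b = sqrt (Pc * Q)" by (simp add: a_a'_b_b'_def real_sqrt_mult)
  also have "\<dots> \<le> sqrt (e * e)"
    using assms by (intro real_sqrt_le_mono mult_mono) auto
  finally have a'b: "a' * b \<le> e" using assms by simp
  have D: "D \<ge> 1 - 2 * e" using ab' a'b unfolding F_D_def by simp
  have "(1 - 2 * e)\<^sup>2 \<le> D\<^sup>2" using D assms by (intro power_mono) auto
  then have "F\<^sup>2 \<le> 4 * (e * (1 - e))" using id1 by (simp add: power2_eq_square algebra_simps)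
  also have "\<dots> = (2 * sqrt (e * (1 - e)))\<^sup>2" using assms by (simp add: power_mult_distrib)
  finally have "F\<^sup>2 \<le> (2 * sqrt (e * (1 - e)))\<^sup>2" .
  then have "F \<le> 2 * sqrt (e * (1 - e))"
    by (rule power2_le_imp_le) (use assms in simp)
  then show ?thesis unfolding F_D_def a_a'_b_b'_def .
qed

lemma final_dist:
  assumes U: "unitary_op U" and alg: "ED_algorithm N e U out T"
    and ex: "all_distinct N x" and ey: "\<not> all_distinct N y"
    and e: "0 \<le> e" "e < 1/2"
  shows "2 - 4 * sqrt (e * (1 - e)) \<le> norm2 (\<lambda>k. st U N x T k - st U N y T k)"
proof -
  let ?x = "st U N x T" and ?y = "st U N y T"
  have sx: "sq_summable ?x" "norm2 ?x = 1" and sy: "sq_summable ?y" "norm2 ?y = 1" using st_ok[OF U] by auto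
  have fs: "final_state U T N z = st U N z T" for z by (simp add: final_state_def st_def)
  define P Pc Q Qc where "P = infsum (\<lambda>k. if out k then (cmod (?x k))\<^sup>2 else 0) UNIV"
    "Pc = infsum (\<lambda>k. if \<not> out k then (cmod (?x k))\<^sup>2 else 0) UNIV"
    "Q = infsum (\<lambda>k. if out k then (cmod (?y k))\<^sup>2 else 0) UNIV"
    "Qc = infsum (\<lambda>k. if \<not> out k then (cmod (?y k))\<^sup>2 else 0) UNIV"
  have "1 - e \<le> infsum (\<lambda>k. if out k = all_distinct N x then (cmod (st U N x T k))\<^sup>2 else 0) UNIV"
    using alg unfolding ED_algorithm_def prob_output_def fs by blast
  then have P1: "1 - e \<le> P" using ex unfolding P_Pc_Q_Qc_def by simp
  have "1 - e \<le> infsum (\<lambda>k. if out k = all_distinct N y then (cmod (st U N y T k))\<^sup>2 else 0) UNIV"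
    using alg unfolding ED_algorithm_def prob_output_def fs by blast
  then have Q1: "1 - e \<le> Qc" using ey unfolding P_Pc_Q_Qc_def by simp
  have split: "infsum (\<lambda>k. if out k then g k else 0) UNIV + infsum (\<lambda>k. if \<not> out k then g k else 0) UNIV = infsum g UNIV"
    if "\<And>Pr. (\<lambda>k. if Pr k then g k else 0) summable_on UNIV" for g :: "label \<Rightarrow> real"
  proof -
    have "infsum (\<lambda>k. if out k then g k else 0) UNIV + infsum (\<lambda>k. if \<not> out k then g k else 0) UNIV
        = infsum (\<lambda>k. (if out k then g k else 0) + (if \<not> out k then g k else 0)) UNIV"
      by (rule infsum_add[symmetric]) (rule that)+
    also have "\<dots> = infsum g UNIV" by (rule infsum_cong) auto
    finally show ?thesis .
  qed
  have PP: "P + Pc = 1" unfolding P_Pc_Q_Qc_def using split[OF sq_summable_restr'[OF sx(1)]] sx(2) unfolding norm2_def by simp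
  have QQ: "Q + Qc = 1" unfolding P_Pc_Q_Qc_def using split[OF sq_summable_restr'[OF sy(1)]] sy(2) unfolding norm2_def by simp
  have nn: "0 \<le> P" "0 \<le> Pc" "0 \<le> Q" "0 \<le> Qc" unfolding P_Pc_Q_Qc_def by (auto intro!: infsum_nonneg)
  define ab where "ab = (\<lambda>k. cmod (?x k) * cmod (?y k))"
  have abs: "(\<lambda>k. if Pr k then ab k else 0) summable_on UNIV" for Pr
    unfolding ab_def by (rule prod_summable[OF sx(1) sy(1)])
  have cs1: "infsum (\<lambda>k. if out k then ab k else 0) UNIV \<le> sqrt P * sqrt Q"
  proof -
    have "infsum (\<lambda>k. (if out k then cmod (?x k) else 0) * (if out k then cmod (?y k) else 0)) UNIV
       \<le> sqrt (infsum (\<lambda>k. (if out k then cmod (?x k) else 0)\<^sup>2) UNIV) * sqrt (infsum (\<lambda>k. (if out k then cmod (?y k) else 0)\<^sup>2) UNIV)"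
      by (rule infsum_CS(2)) (use sq_summable_restr'[OF sx(1), of out] sq_summable_restr'[OF sy(1), of out] in \<open>auto simp: if_distrib[of "\<lambda>z. z\<^sup>2"] cong: if_cong\<close>)
    then show ?thesis unfolding P_Pc_Q_Qc_def ab_def by (simp add: if_distrib[of "\<lambda>z. z\<^sup>2"] if_distrib[of "\<lambda>z. z * _"] cong: if_cong)
  qed
  have cs2: "infsum (\<lambda>k. if \<not> out k then ab k else 0) UNIV \<le> sqrt Pc * sqrt Qc"
  proof -
    have "infsum (\<lambda>k. (if \<not> out k then cmod (?x k) else 0) * (if \<not> out k then cmod (?y k) else 0)) UNIV
       \<le> sqrt (infsum (\<lambda>k. (if \<not> out k then cmod (?x k) else 0)\<^sup>2) UNIV) * sqrt (infsum (\<lambda>k. (if \<not> out k then cmod (?y k) else 0)\<^sup>2) UNIV)"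
      by (rule infsum_CS(2)) (use sq_summable_restr'[OF sx(1), of "\<lambda>k. \<not> out k"] sq_summable_restr'[OF sy(1), of "\<lambda>k. \<not> out k"] in \<open>auto simp: if_distrib[of "\<lambda>z. z\<^sup>2"] cong: if_cong\<close>)
    then show ?thesis unfolding P_Pc_Q_Qc_def ab_def by (simp add: if_distrib[of "\<lambda>z. z\<^sup>2"] if_distrib[of "\<lambda>z. z * _"] cong: if_cong)
  qed
  have F: "infsum ab UNIV \<le> 2 * sqrt (e * (1 - e))"
    using split[OF abs] cs1 cs2 fid_real[OF nn PP QQ P1 Q1 e] by linarith
  have abs': "ab summable_on UNIV" using abs[of "\<lambda>_. True"] by simp
  have eq: "infsum (\<lambda>k. (cmod (?x k))\<^sup>2 + (cmod (?y k))\<^sup>2 + (-2) * ab k) UNIV = 1 + 1 + (-2) * infsum ab UNIV"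
  proof -
    have s1: "(\<lambda>k. (cmod (?x k))\<^sup>2) summable_on UNIV" "(\<lambda>k. (cmod (?y k))\<^sup>2) summable_on UNIV"
      using sx sy unfolding sq_summable_def by auto
    have s3: "(\<lambda>k. (-2) * ab k) summable_on UNIV" using abs' by (rule summable_on_cmult_right)
    have "infsum (\<lambda>k. (cmod (?x k))\<^sup>2 + (cmod (?y k))\<^sup>2 + (-2) * ab k) UNIV
       = infsum (\<lambda>k. (cmod (?x k))\<^sup>2 + (cmod (?y k))\<^sup>2) UNIV + infsum (\<lambda>k. (-2) * ab k) UNIV"
      by (rule infsum_add[OF summable_on_add[OF s1] s3])
    also have "\<dots> = infsum (\<lambda>k. (cmod (?x k))\<^sup>2) UNIV + infsum (\<lambda>k. (cmod (?y k))\<^sup>2) UNIV + (-2) * infsum ab UNIV"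
      using infsum_add[OF s1] infsum_cmult_right[OF abs', of "-2"] by simp
    finally show ?thesis using sx sy unfolding norm2_def by simp
  qed
  have le: "infsum (\<lambda>k. (cmod (?x k))\<^sup>2 + (cmod (?y k))\<^sup>2 + (-2) * ab k) UNIV \<le> norm2 (\<lambda>k. ?x k - ?y k)"
    unfolding norm2_def
  proof (rule infsum_mono)
    show "(\<lambda>k. (cmod (?x k))\<^sup>2 + (cmod (?y k))\<^sup>2 + (-2) * ab k) summable_on UNIV"
      using sx sy summable_on_cmult_right[OF abs', of "-2"] unfolding sq_summable_def by (intro summable_on_add) auto
    show "(\<lambda>k. (cmod (?x k - ?y k))\<^sup>2) summable_on UNIV" using sq_summable_diff[OF sx(1) sy(1)] unfolding sq_summable_def .
    fix k
    have "\<bar>cmod (?x k) - cmod (?y k)\<bar> \<le> cmod (?x k - ?y k)" by (rule norm_triangle_ineq3)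
    then have "(cmod (?x k) - cmod (?y k))\<^sup>2 \<le> (cmod (?x k - ?y k))\<^sup>2"
      by (metis abs_ge_zero power2_abs power_mono)
    then show "(cmod (?x k))\<^sup>2 + (cmod (?y k))\<^sup>2 + (-2) * ab k \<le> (cmod (?x k - ?y k))\<^sup>2"
      unfolding ab_def by (simp add: power2_diff)
  qed
  show ?thesis using eq le F by linarith
qed



definition cpr :: "nat \<Rightarrow> nat \<Rightarrow> nat" where "cpr j i = (if i < j then i else i - 1)"
definition exd :: "nat \<Rightarrow> nat \<Rightarrow> nat" where "exd j m = (if m < j then m else Suc m)"
definition shf :: "nat \<Rightarrow> nat \<Rightarrow> nat" where "shf a v = (if v < a then v else Suc v)"
definition sig :: "nat \<Rightarrow> nat \<Rightarrow> (nat \<Rightarrow> nat) \<Rightarrow> nat \<Rightarrow> nat \<Rightarrow> nat" where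
  "sig N j \<rho> a i = (if i = j then a else if i < N then shf a (\<rho> (cpr j i)) else i)"
definition tau :: "nat \<Rightarrow> (nat \<Rightarrow> nat) \<Rightarrow> nat \<Rightarrow> nat \<Rightarrow> nat" where
  "tau j \<rho> b i = (if i = j then b else \<rho> (cpr j i))"
definition xs :: "nat \<Rightarrow> nat \<Rightarrow> (nat \<Rightarrow> nat) \<Rightarrow> nat \<Rightarrow> nat \<Rightarrow> real" where
  "xs N j \<rho> a = (\<lambda>i. real (sig N j \<rho> a i))"
definition ys :: "nat \<Rightarrow> (nat \<Rightarrow> nat) \<Rightarrow> nat \<Rightarrow> nat \<Rightarrow> real" where
  "ys j \<rho> b = (\<lambda>i. real (tau j \<rho> b i))"

lemma cpr_exd: "cpr j (exd j m) = m" by (simp add: cpr_def exd_def)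
lemma exd_ne: "exd j m \<noteq> j" by (simp add: exd_def)
lemma exd_lt: "m < N - 1 \<Longrightarrow> j < N \<Longrightarrow> exd j m < N" by (simp add: exd_def) linarith
lemma cpr_lt: "i < N \<Longrightarrow> i \<noteq> j \<Longrightarrow> j < N \<Longrightarrow> cpr j i < N - 1" by (auto simp: cpr_def)
lemma cpr_inj: "i \<noteq> j \<Longrightarrow> i' \<noteq> j \<Longrightarrow> cpr j i = cpr j i' \<Longrightarrow> i = i'" by (auto simp: cpr_def split: if_splits)

lemma shf_less_iff: "shf a v < shf a v' \<longleftrightarrow> v < v'" by (simp add: shf_def)
lemma shf_inj: "shf a v = shf a v' \<longleftrightarrow> v = v'" by (auto simp: shf_def)
lemma a_less_shf: "a < shf a v \<longleftrightarrow> a \<le> v" by (simp add: shf_def)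
lemma shf_less_a: "shf a v < a \<longleftrightarrow> v < a" by (simp add: shf_def)
lemma shf_ne: "shf a v \<noteq> a" by (simp add: shf_def)

lemma perm_lt: "\<rho> permutes {..<M} \<Longrightarrow> m < M \<Longrightarrow> \<rho> m < M"
  using permutes_in_image by fastforce

lemma sig_permutes:
  assumes j: "j < N" and r: "\<rho> permutes {..<N - 1}" and a: "a < N"
  shows "sig N j \<rho> a permutes {..<N}"
proof (rule bij_imp_permutes)
  let ?s = "sig N j \<rho> a"
  have into: "?s ` {..<N} \<subseteq> {..<N}"
  proof
    fix v assume "v \<in> ?s ` {..<N}"
    then obtain i where i: "i < N" "v = ?s i" by auto
    show "v \<in> {..<N}"
    proof (cases "i = j")
      case True then show ?thesis using i a by (simp add: sig_def)
    next
      case False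
      have "\<rho> (cpr j i) < N - 1" using perm_lt[OF r cpr_lt[OF i(1) False j]] .
      then show ?thesis using i False by (auto simp: sig_def shf_def)
    qed
  qed
  have inj: "inj_on ?s {..<N}"
  proof (rule inj_onI)
    fix i i' assume ii: "i \<in> {..<N}" "i' \<in> {..<N}" "?s i = ?s i'"
    show "i = i'"
    proof (cases "i = j"; cases "i' = j")
      assume "i \<noteq> j" "i' \<noteq> j"
      then have "\<rho> (cpr j i) = \<rho> (cpr j i')" using ii by (simp add: sig_def shf_inj)
      then have "cpr j i = cpr j i'" using permutes_inj[OF r] by (simp add: inj_eq)
      then show ?thesis using cpr_inj \<open>i \<noteq> j\<close> \<open>i' \<noteq> j\<close> by blast
    qed (use ii shf_ne in \<open>auto simp: sig_def dest: sym\<close>)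
  qed
  show "bij_betw ?s {..<N} {..<N}"
    using inj into endo_inj_surj[of "{..<N}" ?s] by (simp add: bij_betw_def)
  show "\<And>x. x \<notin> {..<N} \<Longrightarrow> ?s x = x" using j by (auto simp: sig_def)
qed

lemma sig_inj:
  assumes j: "j < N"
  shows "inj_on (\<lambda>(\<rho>, a). sig N j \<rho> a) ({\<rho>. \<rho> permutes {..<N - 1}} \<times> {..<N})"
proof (rule inj_onI, clarify)
  fix \<rho> a \<rho>' a'
  assume r: "\<rho> permutes {..<N - 1}" and r': "\<rho>' permutes {..<N - 1}" and eq: "sig N j \<rho> a = sig N j \<rho>' a'"
  have "a = a'" using fun_cong[OF eq, of j] by (simp add: sig_def)
  moreover have "\<rho> = \<rho>'"
  proof
    fix m
    show "\<rho> m = \<rho>' m"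
    proof (cases "m < N - 1")
      case True
      have "sig N j \<rho> a (exd j m) = sig N j \<rho>' a' (exd j m)" using eq by simp
      then have "shf a (\<rho> m) = shf a (\<rho>' m)" using exd_lt[OF True j] exd_ne[of j m] \<open>a = a'\<close>
        by (simp add: sig_def cpr_exd)
      then show ?thesis by (simp add: shf_inj)
    next
      case False
      then show ?thesis using permutes_not_in[OF r] permutes_not_in[OF r'] by simp
    qed
  qed
  ultimately show "\<rho> = \<rho>' \<and> a = a'" by simp
qed

lemma xs_distinct:
  assumes "j < N" "\<rho> permutes {..<N - 1}" "a < N"
  shows "all_distinct N (xs N j \<rho> a)"
proof -
  have "inj_on (sig N j \<rho> a) {..<N}" using permutes_inj_on[OF sig_permutes[OF assms]] .
  then show ?thesis unfolding all_distinct_def xs_def by (auto simp: inj_on_def)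
qed

lemma ys_not_distinct:
  assumes j: "j < N" and r: "\<rho> permutes {..<N - 1}" and b: "b < N - 1"
  shows "\<not> all_distinct N (ys j \<rho> b)"
proof
  assume d: "all_distinct N (ys j \<rho> b)"
  have "b \<in> \<rho> ` {..<N - 1}" using permutes_image[OF r] b by simp
  then obtain m where m: "m < N - 1" "\<rho> m = b" by auto
  have "ys j \<rho> b (exd j m) = ys j \<rho> b j" using m by (simp add: ys_def tau_def exd_ne cpr_exd)
  then have "exd j m = j" using d exd_lt[OF m(1) j] j unfolding all_distinct_def inj_on_def by blast
  then show False using exd_ne by blast
qed

definition invj :: "nat \<Rightarrow> nat \<Rightarrow> label \<Rightarrow> bool" where
  "invj N j k = (case k of (z, i, i') \<Rightarrow> i < N \<and> i' < N \<and> i \<noteq> i' \<and> (i = j \<or> i' = j))"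

lemma cnd_same:
  assumes "\<not> invj N j k"
  shows "cnd N (xs N j \<rho> a) k = cnd N (ys j \<rho> b) k"
  using assms
  by (cases k) (auto simp: invj_def cnd_def xs_def ys_def sig_def tau_def shf_less_iff)

lemma cnd_type1:
  assumes "k = (z, j, i')" "i' < N" "i' \<noteq> j" "j < N"
  shows "cnd N (xs N j \<rho> a) k = (a \<le> \<rho> (cpr j i'))" "cnd N (ys j \<rho> b) k = (b < \<rho> (cpr j i'))"
  using assms by (auto simp: cnd_def xs_def ys_def sig_def tau_def a_less_shf)

lemma cnd_type2:
  assumes "k = (z, i, j)" "i < N" "i \<noteq> j" "j < N"
  shows "cnd N (xs N j \<rho> a) k = (\<rho> (cpr j i) < a)" "cnd N (ys j \<rho> b) k = (\<rho> (cpr j i) < b)"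
  using assms by (auto simp: cnd_def xs_def ys_def sig_def tau_def shf_less_a)



definition phi :: "nat \<Rightarrow> nat \<Rightarrow> real" where
  "phi s t = sqrt ((4 * real s + 1) / (4 * real t + 1)) / (2 * real s + 2 * real t + 1)"

lemma phi_nonneg: "0 \<le> phi s t" by (simp add: phi_def)

lemma F_deriv:
  assumes x: "0 < x" and y: "0 < y"
  shows "((\<lambda>y. arctan (sqrt y / sqrt x)) has_real_derivative (sqrt x / (2 * sqrt y * (x + y)))) (at y)"
proof -
  have "((\<lambda>y. arctan (sqrt y / sqrt x)) has_real_derivative
        inverse (1 + (sqrt y / sqrt x)\<^sup>2) * (inverse (sqrt y) / 2 / sqrt x)) (at y)"
    by (rule DERIV_chain2[OF DERIV_arctan] DERIV_cdivide DERIV_real_sqrt y)+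
  moreover have "inverse (1 + (sqrt y / sqrt x)\<^sup>2) * (inverse (sqrt y) / 2 / sqrt x) = sqrt x / (2 * sqrt y * (x + y))"
  proof -
    have alg: "inverse (1 + (v / u)\<^sup>2) * (inverse v / 2 / u) = u / (2 * v * (u\<^sup>2 + v\<^sup>2))"
      if "0 < u" "0 < v" for u v :: real
      using that by (simp add: field_simps power2_eq_square)
    show ?thesis using alg[of "sqrt x" "sqrt y"] x y by simp
  qed
  ultimately show ?thesis by simp
qed

lemma f_anti:
  assumes "0 < x" "0 < y1" "y1 \<le> y2"
  shows "sqrt x / (2 * sqrt y2 * (x + y2)) \<le> sqrt x / (2 * sqrt y1 * (x + y1))"
  using assms by (intro divide_left_mono mult_mono mult_pos_pos) auto

lemma step_bound:
  assumes x: "0 < x" and t: "1/4 \<le> a"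
  shows "sqrt x / (2 * sqrt (a + 1) * (x + (a + 1))) \<le> arctan (sqrt (a + 1) / sqrt x) - arctan (sqrt a / sqrt x)"
proof -
  obtain z where z: "a < z" "z < a + 1"
    and eq: "arctan (sqrt (a + 1) / sqrt x) - arctan (sqrt a / sqrt x) = (a + 1 - a) * (sqrt x / (2 * sqrt z * (x + z)))"
    using MVT2[of a "a + 1" "\<lambda>y. arctan (sqrt y / sqrt x)" "\<lambda>y. sqrt x / (2 * sqrt y * (x + y))"]
      F_deriv[OF x] t by force
  have "sqrt x / (2 * sqrt (a + 1) * (x + (a + 1))) \<le> sqrt x / (2 * sqrt z * (x + z))"
    using f_anti[OF x, of z "a + 1"] z t by simp
  then show ?thesis using eq by simp
qed

lemma arctan_lower:
  assumes "0 \<le> r"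
  shows "r / (1 + r\<^sup>2) \<le> arctan r"
proof (cases "r = 0")
  case True then show ?thesis by simp
next
  case False
  then have r: "0 < r" using assms by simp
  obtain z where z: "0 < z" "z < r" and eq: "arctan r - arctan 0 = (r - 0) * inverse (1 + z\<^sup>2)"
    using MVT2[of 0 r arctan "\<lambda>z. inverse (1 + z\<^sup>2)"] r DERIV_arctan by blast
  have "inverse (1 + r\<^sup>2) \<le> inverse (1 + z\<^sup>2)"
    using z by (intro le_imp_inverse_le) (auto intro: power_mono add_pos_nonneg)
  then have "r * inverse (1 + r\<^sup>2) \<le> r * inverse (1 + z\<^sup>2)" using r by (intro mult_left_mono) auto
  then show ?thesis using eq by (simp add: divide_inverse)
qed

lemma phi_as_f:
  "phi s t = sqrt (real s + 1/4) / (2 * sqrt (real t + 1/4) * ((real s + 1/4) + (real t + 1/4)))"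
proof -
  have "(4 * real s + 1) / (4 * real t + 1) = (real s + 1/4) / (real t + 1/4)" by (simp add: field_simps)
  moreover have "2 * real s + 2 * real t + 1 = 2 * ((real s + 1/4) + (real t + 1/4))" by simp
  ultimately show ?thesis unfolding phi_def by (simp add: real_sqrt_divide)
qed

lemma phi_sum_lessThan: "(\<Sum>t<M. phi s t) \<le> pi / 2 + 1 / 2"
proof -
  define x where "x = real s + 1/4"
  have x: "0 < x" by (simp add: x_def)
  define G where "G t = arctan (sqrt (real t + 1/4) / sqrt x)" for t :: nat
  have st: "phi s (Suc t) \<le> G (Suc t) - G t" for t
  proof -
    have "phi s (Suc t) = sqrt x / (2 * sqrt ((real t + 1/4) + 1) * (x + ((real t + 1/4) + 1)))"
      unfolding phi_as_f x_def by (simp add: add.commute add.left_commute)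
    also have "\<dots> \<le> arctan (sqrt ((real t + 1/4) + 1) / sqrt x) - arctan (sqrt (real t + 1/4) / sqrt x)"
      by (rule step_bound[OF x]) simp
    also have "\<dots> = G (Suc t) - G t" unfolding G_def by (simp add: add.commute add.left_commute)
    finally show ?thesis .
  qed
  have tel: "(\<Sum>t<n. phi s (Suc t)) \<le> G n - G 0" for n
  proof -
    have "(\<Sum>t<n. phi s (Suc t)) \<le> (\<Sum>t<n. G (Suc t) - G t)" by (rule sum_mono) (rule st)
    also have "\<dots> = G n - G 0" by (rule sum_lessThan_telescope)
    finally show ?thesis .
  qed
  define r where "r = (1/2) / sqrt x"
  have r0: "0 \<le> r" using x by (simp add: r_def)
  have G0: "G 0 = arctan r" by (simp add: G_def r_def real_sqrt_divide)
  have phi0: "phi s 0 = 2 * r / (1 + r\<^sup>2)"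
  proof -
    have sx: "(sqrt x)\<^sup>2 = x" using x by simp
    have p: "0 < sqrt x" using x by simp
    have "phi s 0 = sqrt x / (2 * sqrt (1/4) * (x + 1/4))" unfolding phi_as_f x_def by simp
    also have "\<dots> = sqrt x / (x + 1/4)" by (simp add: real_sqrt_divide)
    also have "\<dots> = 2 * r / (1 + r\<^sup>2)"
    proof -
      have alg: "u / (u\<^sup>2 + 1/4) = 2 * ((1/2) / u) / (1 + ((1/2) / u)\<^sup>2)" if "0 < u" for u :: real
        using that by (simp add: field_simps power2_eq_square)
      show ?thesis unfolding r_def using alg[OF p] unfolding sx .
    qed
    finally show ?thesis .
  qed
  have r2: "r / (1 + r\<^sup>2) \<le> 1/2"
  proof -
    have "0 \<le> (r - 1)\<^sup>2" by simp
    then have "2 * r \<le> 1 + r\<^sup>2" by (simp add: power2_diff)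
    then show ?thesis by (simp add: field_simps add_pos_nonneg)
  qed
  have Gn: "G n < pi / 2" for n unfolding G_def by (rule arctan_ubound)
  show ?thesis
  proof (cases M)
    case 0 then show ?thesis by (simp add: pi_gt_zero add_pos_nonneg)
  next
    case (Suc n)
    have "(\<Sum>t<M. phi s t) = phi s 0 + (\<Sum>t<n. phi s (Suc t))" unfolding Suc by (rule sum.lessThan_Suc_shift)
    also have "\<dots> \<le> 2 * r / (1 + r\<^sup>2) + (G n - arctan r)" using tel[of n] phi0 G0 by simp
    also have "\<dots> \<le> pi / 2 + 1 / 2"
    proof -
      have "2 * r / (1 + r\<^sup>2) = 2 * (r / (1 + r\<^sup>2))" by simp
      then show ?thesis using arctan_lower[OF r0] r2 Gn[of n] by linarith
    qed
    finally show ?thesis .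
  qed
qed

definition Kc :: real where "Kc = pi / 2 + 1 / 2"

lemma phi_sum: "finite T \<Longrightarrow> (\<Sum>t\<in>T. phi s t) \<le> Kc"
proof -
  assume T: "finite T"
  obtain M where "T \<subseteq> {..<M}" using T finite_nat_bounded by blast
  then have "(\<Sum>t\<in>T. phi s t) \<le> (\<Sum>t<M. phi s t)" by (intro sum_mono2) (auto simp: phi_nonneg)
  then show ?thesis using phi_sum_lessThan[of s M] unfolding Kc_def by linarith
qed



definition sdist :: "nat \<Rightarrow> nat \<Rightarrow> nat" where "sdist p a = (if a \<le> p then p - a else a - p - 1)"
definition tdist :: "nat \<Rightarrow> nat \<Rightarrow> nat" where "tdist p b = (if p \<le> b then b - p else p - b)"
definition difT :: "bool \<Rightarrow> nat \<Rightarrow> nat \<Rightarrow> nat \<Rightarrow> bool" where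
  "difT ty p a b = (if ty then (a \<le> p) \<noteq> (b < p) else (p < a) \<noteq> (p < b))"
definition wt :: "nat \<Rightarrow> nat \<Rightarrow> real" where "wt a b = 1 / \<bar>2 * real a - 2 * real b - 1\<bar>"
definition al :: "real \<Rightarrow> nat \<Rightarrow> nat \<Rightarrow> nat \<Rightarrow> real" where
  "al l p a b = l * sqrt ((4 * real (sdist p a) + 1) / (4 * real (tdist p b) + 1))"

lemma difT_opp: "difT ty p a b \<Longrightarrow> (a \<le> p \<and> p \<le> b) \<or> (p < a \<and> b \<le> p)"
  by (auto simp: difT_def split: if_splits)

lemma wt_eq:
  assumes "difT ty p a b"
  shows "\<bar>2 * real a - 2 * real b - 1\<bar> = 2 * real (sdist p a) + 2 * real (tdist p b) + 1"
  using difT_opp[OF assms] by (auto simp: sdist_def tdist_def of_nat_diff)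

lemma wt_al:
  assumes "difT ty p a b" "0 < l"
  shows "wt a b * al l p a b = l * phi (sdist p a) (tdist p b)"
    and "wt a b / al l p a b = phi (tdist p b) (sdist p a) / l"
proof -
  let ?s = "real (sdist p a)" and ?t = "real (tdist p b)"
  have W: "wt a b = 1 / (2 * ?s + 2 * ?t + 1)" unfolding wt_def wt_eq[OF assms(1)] ..
  show "wt a b * al l p a b = l * phi (sdist p a) (tdist p b)"
    unfolding W al_def phi_def by simp
  define q where "q = sqrt ((4 * ?s + 1) / (4 * ?t + 1))"
  have pos: "0 < q" unfolding q_def by (simp add: add_pos_nonneg)
  have D: "0 < 2 * ?s + 2 * ?t + 1" by (simp add: add_pos_nonneg)
  have "sqrt ((4 * ?t + 1) / (4 * ?s + 1)) = 1 / q"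
    unfolding q_def by (simp add: real_sqrt_divide)
  then have P: "phi (tdist p b) (sdist p a) = (1 / q) / (2 * ?s + 2 * ?t + 1)"
    unfolding phi_def by (simp add: add.commute add.left_commute)
  have A: "al l p a b = l * q" unfolding al_def q_def ..
  show "wt a b / al l p a b = phi (tdist p b) (sdist p a) / l"
    unfolding W A P using pos D assms(2) by (simp add: field_simps)
qed

lemma sum_inj_phi:
  assumes "finite S" "inj_on g S"
  shows "(\<Sum>b\<in>S. phi s (g b)) \<le> Kc"
proof -
  have "(\<Sum>b\<in>S. phi s (g b)) = (\<Sum>t\<in>g ` S. phi s t)"
    using sum.reindex[OF assms(2), of "phi s"] by simp
  also have "\<dots> \<le> Kc" using assms by (intro phi_sum) auto
  finally show ?thesis .
qed

lemma inj_tdist1: "inj_on (tdist p) {b. p \<le> b}" by (auto simp: inj_on_def tdist_def)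
lemma inj_tdist2: "inj_on (tdist p) {b. b \<le> p}" by (auto simp: inj_on_def tdist_def)
lemma inj_sdist1: "inj_on (sdist p) {a. a \<le> p}" by (auto simp: inj_on_def sdist_def)
lemma inj_sdist2: "inj_on (sdist p) {a. p < a}" by (auto simp: inj_on_def sdist_def)

lemma row_sum:
  assumes l: "0 < l"
  shows "(\<Sum>b<M. if difT ty p a b then wt a b * al l p a b else 0) \<le> l * Kc"
proof -
  let ?S = "{b\<in>{..<M}. difT ty p a b}"
  have "(\<Sum>b<M. if difT ty p a b then wt a b * al l p a b else 0) = (\<Sum>b\<in>?S. wt a b * al l p a b)"
    by (rule sum.inter_filter[symmetric]) simp
  also have "\<dots> = (\<Sum>b\<in>?S. l * phi (sdist p a) (tdist p b))"
    by (rule sum.cong) (auto simp: wt_al(1)[OF _ l])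
  also have "\<dots> = l * (\<Sum>b\<in>?S. phi (sdist p a) (tdist p b))" by (simp add: sum_distrib_left)
  also have "\<dots> \<le> l * Kc"
  proof -
    have "inj_on (tdist p) ?S"
    proof (cases "a \<le> p")
      case True
      then have "?S \<subseteq> {b. p \<le> b}" using difT_opp[of ty p a] by force
      then show ?thesis using inj_on_subset[OF inj_tdist1] by blast
    next
      case False
      then have "?S \<subseteq> {b. b \<le> p}" using difT_opp[of ty p a] by force
      then show ?thesis using inj_on_subset[OF inj_tdist2] by blast
    qed
    then show ?thesis using l by (intro mult_left_mono sum_inj_phi) auto
  qed
  finally show ?thesis .
qed

lemma col_sum:
  assumes l: "0 < l"
  shows "(\<Sum>a<M. if difT ty p a b then wt a b / al l p a b else 0) \<le> Kc / l"
proof -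
  let ?S = "{a\<in>{..<M}. difT ty p a b}"
  have "(\<Sum>a<M. if difT ty p a b then wt a b / al l p a b else 0) = (\<Sum>a\<in>?S. wt a b / al l p a b)"
    by (rule sum.inter_filter[symmetric]) simp
  also have "\<dots> = (\<Sum>a\<in>?S. phi (tdist p b) (sdist p a) / l)"
    by (rule sum.cong) (auto simp: wt_al(2)[OF _ l])
  also have "\<dots> = (\<Sum>a\<in>?S. phi (tdist p b) (sdist p a)) / l" by (simp add: sum_divide_distrib)
  also have "\<dots> \<le> Kc / l"
  proof -
    have "?S \<subseteq> {a. a \<le> p} \<or> ?S \<subseteq> {a. p < a}"
      by (cases ty; cases "b < p"; cases "p < b") (auto simp: difT_def)
    then have "inj_on (sdist p) ?S"
      using inj_on_subset[OF inj_sdist1] inj_on_subset[OF inj_sdist2] by blast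
    then show ?thesis using l by (intro divide_right_mono sum_inj_phi) auto
  qed
  finally show ?thesis .
qed

lemma al_pos: "0 < l \<Longrightarrow> 0 < al l p a b"
  unfolding al_def by (intro mult_pos_pos real_sqrt_gt_zero divide_pos_pos) (auto simp: add_pos_nonneg)

lemma wt_nonneg: "0 \<le> wt a b" by (simp add: wt_def)



lemma schur_pt:
  fixes w al :: "'a \<Rightarrow> 'b \<Rightarrow> real" and X :: "'a \<Rightarrow> real" and Y :: "'b \<Rightarrow> real"
  assumes A: "finite A" and B: "finite B"
    and w0: "\<And>a b. 0 \<le> w a b" and al0: "\<And>a b. 0 < al a b"
    and X0: "\<And>a. 0 \<le> X a" and Y0: "\<And>b. 0 \<le> Y b"
    and R: "\<And>a. a \<in> A \<Longrightarrow> (\<Sum>b\<in>B. if D a b then w a b * al a b else 0) \<le> Rb"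
    and C: "\<And>b. b \<in> B \<Longrightarrow> (\<Sum>a\<in>A. if D a b then w a b / al a b else 0) \<le> Cb"
  shows "(\<Sum>a\<in>A. \<Sum>b\<in>B. if D a b then w a b * (X a * Y b) else 0)
     \<le> Rb / 2 * (\<Sum>a\<in>A. (X a)\<^sup>2) + Cb / 2 * (\<Sum>b\<in>B. (Y b)\<^sup>2)"
proof -
  have pt: "(if D a b then w a b * (X a * Y b) else 0)
      \<le> (X a)\<^sup>2 / 2 * (if D a b then w a b * al a b else 0) + (Y b)\<^sup>2 / 2 * (if D a b then w a b / al a b else 0)" for a b
  proof (cases "D a b")
    case True
    have p: "0 < al a b" by (rule al0)
    have "0 \<le> (al a b * X a - Y b)\<^sup>2 / al a b" using p by simp
    then have "X a * Y b \<le> al a b * (X a)\<^sup>2 / 2 + (Y b)\<^sup>2 / (2 * al a b)"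
      using p by (simp add: power2_diff field_simps power2_eq_square)
    then have "w a b * (X a * Y b) \<le> w a b * (al a b * (X a)\<^sup>2 / 2 + (Y b)\<^sup>2 / (2 * al a b))"
      by (rule mult_left_mono[OF _ w0])
    then show ?thesis using True by (simp add: field_simps)
  qed (simp)
  have "(\<Sum>a\<in>A. \<Sum>b\<in>B. if D a b then w a b * (X a * Y b) else 0)
      \<le> (\<Sum>a\<in>A. \<Sum>b\<in>B. (X a)\<^sup>2 / 2 * (if D a b then w a b * al a b else 0) + (Y b)\<^sup>2 / 2 * (if D a b then w a b / al a b else 0))"
    by (intro sum_mono pt)
  also have "\<dots> = (\<Sum>a\<in>A. (X a)\<^sup>2 / 2 * (\<Sum>b\<in>B. if D a b then w a b * al a b else 0))
      + (\<Sum>b\<in>B. (Y b)\<^sup>2 / 2 * (\<Sum>a\<in>A. if D a b then w a b / al a b else 0))"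
    by (simp add: sum.distrib sum_distrib_left sum.swap[of _ A B])
  also have "\<dots> \<le> (\<Sum>a\<in>A. (X a)\<^sup>2 / 2 * Rb) + (\<Sum>b\<in>B. (Y b)\<^sup>2 / 2 * Cb)"
    by (intro add_mono sum_mono mult_left_mono R C) auto
  also have "\<dots> = Rb / 2 * (\<Sum>a\<in>A. (X a)\<^sup>2) + Cb / 2 * (\<Sum>b\<in>B. (Y b)\<^sup>2)"
    by (simp add: sum_distrib_left sum_distrib_right field_simps)
  finally show ?thesis .
qed

definition ind :: "bool \<Rightarrow> real" where "ind P = (if P then 1 else 0)"

lemma ind_01: "0 \<le> ind P" "ind P \<le> 1" by (simp_all add: ind_def)

lemma invj_type:
  assumes "invj N j k" "j < N"
  obtains z i' where "k = (z, j, i')" "i' < N" "i' \<noteq> j"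
    | z i where "k = (z, i, j)" "i < N" "i \<noteq> j"
  using assms by (cases k) (auto simp: invj_def)

lemma D_difT:
  assumes "invj N j k" "j < N"
  shows "\<exists>ty p. \<forall>a b. (cnd N (xs N j \<rho> a) k \<noteq> cnd N (ys j \<rho> b) k) = difT ty p a b"
proof -
  from assms show ?thesis
  proof (cases rule: invj_type)
    case (1 z i')
    show ?thesis
      by (rule exI[of _ True], rule exI[of _ "\<rho> (cpr j i')"])
         (simp add: cnd_type1[OF 1 assms(2)] difT_def)
  next
    case (2 z i)
    show ?thesis
      by (rule exI[of _ False], rule exI[of _ "\<rho> (cpr j i)"])
         (simp add: cnd_type2[OF 2 assms(2)] difT_def)
  qed
qed

lemma schur_jr:
  assumes U: "unitary_op U" and j: "j < N" and l: "0 < l"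
  shows "(\<Sum>a<N. \<Sum>b<N - 1. wt a b * Delta U N (xs N j \<rho> a) (ys j \<rho> b) t)
   \<le> l * Kc / 2 * (\<Sum>a<N. infsum (\<lambda>k. (cmod (st U N (xs N j \<rho> a) t k))\<^sup>2 * ind (invj N j k)) UNIV)
     + Kc / l / 2 * (\<Sum>b<N - 1. infsum (\<lambda>k. (cmod (st U N (ys j \<rho> b) t k))\<^sup>2 * ind (invj N j k)) UNIV)"
proof -
  define A where "A a = st U N (xs N j \<rho> a) t" for a
  define B where "B b = st U N (ys j \<rho> b) t" for b
  define g where "g a b = (\<lambda>k. if cnd N (xs N j \<rho> a) k \<noteq> cnd N (ys j \<rho> b) k then cmod (A a k) * cmod (B b k) else 0)" for a b
  have sA: "sq_summable (A a)" for a unfolding A_def using st_ok[OF U] by blast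
  have sB: "sq_summable (B b)" for b unfolding B_def using st_ok[OF U] by blast
  have gs: "g a b summable_on UNIV" for a b unfolding g_def by (rule prod_summable[OF sA sB])
  have gs': "(\<lambda>k. wt a b * g a b k) summable_on UNIV" for a b by (rule summable_on_cmult_right[OF gs])
  have As: "(\<lambda>k. (cmod (A a k))\<^sup>2 * ind (invj N j k)) summable_on UNIV" for a
    by (rule sq_summable_mult[OF sA]) (rule ind_01)+
  have Bs: "(\<lambda>k. (cmod (B b k))\<^sup>2 * ind (invj N j k)) summable_on UNIV" for b
    by (rule sq_summable_mult[OF sB]) (rule ind_01)+
  have L: "(\<Sum>a<N. \<Sum>b<N - 1. wt a b * Delta U N (xs N j \<rho> a) (ys j \<rho> b) t)
      = infsum (\<lambda>k. \<Sum>a<N. \<Sum>b<N - 1. wt a b * g a b k) UNIV"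
  proof -
    have "(\<Sum>a<N. \<Sum>b<N - 1. wt a b * Delta U N (xs N j \<rho> a) (ys j \<rho> b) t)
        = (\<Sum>a<N. \<Sum>b<N - 1. infsum (\<lambda>k. wt a b * g a b k) UNIV)"
    proof (intro sum.cong refl)
      fix a b
      have "Delta U N (xs N j \<rho> a) (ys j \<rho> b) t = infsum (g a b) UNIV"
        unfolding Delta_def g_def A_def B_def ..
      then show "wt a b * Delta U N (xs N j \<rho> a) (ys j \<rho> b) t = infsum (\<lambda>k. wt a b * g a b k) UNIV"
        using infsum_cmult_right[of "wt a b" "g a b" UNIV] gs by simp
    qed
    also have "\<dots> = (\<Sum>a<N. infsum (\<lambda>k. \<Sum>b<N - 1. wt a b * g a b k) UNIV)"
      by (rule sum.cong[OF refl], rule infsum_sum_fin[symmetric]) (auto intro: gs')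
    also have "\<dots> = infsum (\<lambda>k. \<Sum>a<N. \<Sum>b<N - 1. wt a b * g a b k) UNIV"
      by (rule infsum_sum_fin[symmetric]) (auto intro!: summable_on_sum_fin gs')
    finally show ?thesis .
  qed
  have Rr: "l * Kc / 2 * (\<Sum>a<N. infsum (\<lambda>k. (cmod (A a k))\<^sup>2 * ind (invj N j k)) UNIV)
     + Kc / l / 2 * (\<Sum>b<N - 1. infsum (\<lambda>k. (cmod (B b k))\<^sup>2 * ind (invj N j k)) UNIV)
     = infsum (\<lambda>k. l * Kc / 2 * (\<Sum>a<N. (cmod (A a k))\<^sup>2 * ind (invj N j k))
          + Kc / l / 2 * (\<Sum>b<N - 1. (cmod (B b k))\<^sup>2 * ind (invj N j k))) UNIV"
  proof -
    have s1: "(\<lambda>k. \<Sum>a<N. (cmod (A a k))\<^sup>2 * ind (invj N j k)) summable_on UNIV"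
      by (rule summable_on_sum_fin) (auto intro: As)
    have s2: "(\<lambda>k. \<Sum>b<N - 1. (cmod (B b k))\<^sup>2 * ind (invj N j k)) summable_on UNIV"
      by (rule summable_on_sum_fin) (auto intro: Bs)
    show ?thesis
      apply (subst infsum_add)
        apply (rule summable_on_cmult_right[OF s1])
       apply (rule summable_on_cmult_right[OF s2])
      apply (subst infsum_cmult_right, rule s1)
      apply (subst infsum_cmult_right, rule s2)
      apply (subst infsum_sum_fin, simp, rule As)
      apply (subst infsum_sum_fin, simp, rule Bs)
      ..
  qed
  have pt: "(\<Sum>a<N. \<Sum>b<N - 1. wt a b * g a b k)
     \<le> l * Kc / 2 * (\<Sum>a<N. (cmod (A a k))\<^sup>2 * ind (invj N j k))
          + Kc / l / 2 * (\<Sum>b<N - 1. (cmod (B b k))\<^sup>2 * ind (invj N j k))" for k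
  proof (cases "invj N j k")
    case False
    then have "g a b k = 0" for a b unfolding g_def using cnd_same[OF False] by simp
    then show ?thesis using False by (simp add: ind_def)
  next
    case True
    obtain ty p where tp: "\<And>a b. (cnd N (xs N j \<rho> a) k \<noteq> cnd N (ys j \<rho> b) k) = difT ty p a b"
      using D_difT[OF True j] by blast
    have e: "wt a b * g a b k = (if difT ty p a b then wt a b * (cmod (A a k) * cmod (B b k)) else 0)" for a b
      unfolding g_def tp by simp
    have "(\<Sum>a<N. \<Sum>b<N - 1. if difT ty p a b then wt a b * (cmod (A a k) * cmod (B b k)) else 0)
        \<le> l * Kc / 2 * (\<Sum>a<N. (cmod (A a k))\<^sup>2) + Kc / l / 2 * (\<Sum>b<N - 1. (cmod (B b k))\<^sup>2)"
      by (rule schur_pt[where al = "al l p"]) (auto intro: wt_nonneg al_pos[OF l] row_sum[OF l] col_sum[OF l])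
    then show ?thesis using True by (simp add: e ind_def)
  qed
  have M: "infsum (\<lambda>k. \<Sum>a<N. \<Sum>b<N - 1. wt a b * g a b k) UNIV
     \<le> infsum (\<lambda>k. l * Kc / 2 * (\<Sum>a<N. (cmod (A a k))\<^sup>2 * ind (invj N j k))
          + Kc / l / 2 * (\<Sum>b<N - 1. (cmod (B b k))\<^sup>2 * ind (invj N j k))) UNIV"
  proof (rule infsum_mono)
    show "(\<lambda>k. \<Sum>a<N. \<Sum>b<N - 1. wt a b * g a b k) summable_on UNIV"
      by (auto intro!: summable_on_sum_fin gs')
    show "(\<lambda>k. l * Kc / 2 * (\<Sum>a<N. (cmod (A a k))\<^sup>2 * ind (invj N j k))
          + Kc / l / 2 * (\<Sum>b<N - 1. (cmod (B b k))\<^sup>2 * ind (invj N j k))) summable_on UNIV"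
      by (intro summable_on_add summable_on_cmult_right summable_on_sum_fin) (auto intro: As Bs)
  qed (rule pt)
  have "(\<Sum>a<N. \<Sum>b<N - 1. wt a b * Delta U N (xs N j \<rho> a) (ys j \<rho> b) t)
     \<le> l * Kc / 2 * (\<Sum>a<N. infsum (\<lambda>k. (cmod (A a k))\<^sup>2 * ind (invj N j k)) UNIV)
     + Kc / l / 2 * (\<Sum>b<N - 1. infsum (\<lambda>k. (cmod (B b k))\<^sup>2 * ind (invj N j k)) UNIV)"
    using L M Rr by simp
  then show ?thesis by (simp only: A_def B_def)
qed



lemma ind_sum_le2: "(\<Sum>j<N. ind (invj N j k)) \<le> 2"
proof -
  obtain z i i' where k: "k = (z, i, i')" by (cases k)
  have "(\<Sum>j<N. ind (invj N j k)) \<le> (\<Sum>j<N. (if j = i then 1 else 0) + (if j = i' then 1 else 0))"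
    by (rule sum_mono) (auto simp: ind_def invj_def k)
  also have "\<dots> = (if i \<in> {..<N} then 1 else 0) + (if i' \<in> {..<N} then 1 else 0)"
    by (simp add: sum.distrib)
  also have "\<dots> \<le> 2" by simp
  finally show ?thesis .
qed

lemma xside:
  assumes U: "unitary_op U"
  shows "(\<Sum>j<N. \<Sum>\<rho>\<in>{\<rho>. \<rho> permutes {..<N - 1}}. \<Sum>a<N.
            infsum (\<lambda>k. (cmod (st U N (xs N j \<rho> a) t k))\<^sup>2 * ind (invj N j k)) UNIV) \<le> 2 * fact N"
proof -
  let ?R = "{\<rho>. \<rho> permutes {..<N - 1}}" and ?P = "{\<sigma>. \<sigma> permutes {..<N}}"
  define h where "h j \<sigma> = infsum (\<lambda>k. (cmod (st U N (\<lambda>i. real (\<sigma> i)) t k))\<^sup>2 * ind (invj N j k)) UNIV" for j \<sigma>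
  have h0: "0 \<le> h j \<sigma>" for j \<sigma> unfolding h_def by (intro infsum_nonneg) (simp add: ind_01)
  have fR: "finite ?R" by (rule finite_permutations) simp
  have fP: "finite ?P" by (rule finite_permutations) simp
  have step1: "(\<Sum>\<rho>\<in>?R. \<Sum>a<N. h j (sig N j \<rho> a)) \<le> (\<Sum>\<sigma>\<in>?P. h j \<sigma>)" if j: "j < N" for j
  proof -
    have "(\<Sum>\<rho>\<in>?R. \<Sum>a<N. h j (sig N j \<rho> a)) = (\<Sum>p\<in>?R \<times> {..<N}. h j ((\<lambda>(\<rho>, a). sig N j \<rho> a) p))"
      by (simp add: sum.cartesian_product split_def)
    also have "\<dots> = (\<Sum>\<sigma>\<in>(\<lambda>(\<rho>, a). sig N j \<rho> a) ` (?R \<times> {..<N}). h j \<sigma>)"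
      by (rule sum.reindex[symmetric, unfolded comp_def]) (rule sig_inj[OF j])
    also have "\<dots> \<le> (\<Sum>\<sigma>\<in>?P. h j \<sigma>)"
      by (rule sum_mono2[OF fP]) (use sig_permutes[OF j] h0 in auto)
    finally show ?thesis .
  qed
  have step2: "(\<Sum>j<N. h j \<sigma>) \<le> 2" if "\<sigma> \<in> ?P" for \<sigma>
  proof -
    let ?s = "st U N (\<lambda>i. real (\<sigma> i)) t"
    have ss: "sq_summable ?s" "norm2 ?s = 1" using st_ok[OF U] by auto
    have "(\<Sum>j<N. h j \<sigma>) = infsum (\<lambda>k. \<Sum>j<N. (cmod (?s k))\<^sup>2 * ind (invj N j k)) UNIV"
      unfolding h_def by (rule infsum_sum_fin[symmetric]) (auto intro!: sq_summable_mult[OF ss(1)] ind_01)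
    also have "\<dots> \<le> infsum (\<lambda>k. 2 * (cmod (?s k))\<^sup>2) UNIV"
    proof (rule infsum_mono)
      show "(\<lambda>k. \<Sum>j<N. (cmod (?s k))\<^sup>2 * ind (invj N j k)) summable_on UNIV"
        by (rule summable_on_sum_fin) (auto intro!: sq_summable_mult[OF ss(1)] ind_01)
      show "(\<lambda>k. 2 * (cmod (?s k))\<^sup>2) summable_on UNIV"
        using ss(1) unfolding sq_summable_def by (rule summable_on_cmult_right)
      fix k
      have "(\<Sum>j<N. (cmod (?s k))\<^sup>2 * ind (invj N j k)) = (cmod (?s k))\<^sup>2 * (\<Sum>j<N. ind (invj N j k))"
        by (simp add: sum_distrib_left)
      also have "\<dots> \<le> (cmod (?s k))\<^sup>2 * 2" by (rule mult_left_mono[OF ind_sum_le2]) simp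
      finally show "(\<Sum>j<N. (cmod (?s k))\<^sup>2 * ind (invj N j k)) \<le> 2 * (cmod (?s k))\<^sup>2" by simp
    qed
    also have "\<dots> = 2" using ss unfolding sq_summable_def norm2_def by (simp add: infsum_cmult_right)
    finally show ?thesis .
  qed
  have "(\<Sum>j<N. \<Sum>\<rho>\<in>?R. \<Sum>a<N. infsum (\<lambda>k. (cmod (st U N (xs N j \<rho> a) t k))\<^sup>2 * ind (invj N j k)) UNIV)
      = (\<Sum>j<N. \<Sum>\<rho>\<in>?R. \<Sum>a<N. h j (sig N j \<rho> a))"
    unfolding h_def xs_def ..
  also have "\<dots> \<le> (\<Sum>j<N. \<Sum>\<sigma>\<in>?P. h j \<sigma>)" by (rule sum_mono) (rule step1, simp)
  also have "\<dots> = (\<Sum>\<sigma>\<in>?P. \<Sum>j<N. h j \<sigma>)" by (rule sum.swap)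
  also have "\<dots> \<le> (\<Sum>\<sigma>\<in>?P. 2)" by (rule sum_mono) (rule step2)
  also have "\<dots> = 2 * fact N" using card_permutations[of "{..<N}" N] by simp
  finally show ?thesis .
qed

lemma card_R: "card {\<rho>. \<rho> permutes {..<M}} = fact M"
  using card_permutations[of "{..<M}" M] by simp

lemma yside:
  assumes U: "unitary_op U"
  shows "(\<Sum>j<N. \<Sum>\<rho>\<in>{\<rho>. \<rho> permutes {..<N - 1}}. \<Sum>b<N - 1.
            infsum (\<lambda>k. (cmod (st U N (ys j \<rho> b) t k))\<^sup>2 * ind (invj N j k)) UNIV)
         \<le> real N * fact (N - 1) * real (N - 1)"
proof -
  let ?R = "{\<rho>. \<rho> permutes {..<N - 1}}"
  have one: "infsum (\<lambda>k. (cmod (st U N y t k))\<^sup>2 * ind (invj N j k)) UNIV \<le> 1" for y j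
  proof -
    have ss: "sq_summable (st U N y t)" "norm2 (st U N y t) = 1" using st_ok[OF U] by auto
    have "infsum (\<lambda>k. (cmod (st U N y t k))\<^sup>2 * ind (invj N j k)) UNIV \<le> infsum (\<lambda>k. (cmod (st U N y t k))\<^sup>2) UNIV"
    proof (rule infsum_mono)
      show "(\<lambda>k. (cmod (st U N y t k))\<^sup>2 * ind (invj N j k)) summable_on UNIV"
        by (auto intro!: sq_summable_mult[OF ss(1)] ind_01)
      show "(\<lambda>k. (cmod (st U N y t k))\<^sup>2) summable_on UNIV" using ss(1) unfolding sq_summable_def .
      fix k show "(cmod (st U N y t k))\<^sup>2 * ind (invj N j k) \<le> (cmod (st U N y t k))\<^sup>2"
        using ind_01[of "invj N j k"] by (simp add: mult_left_le)
    qed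
    then show ?thesis using ss unfolding norm2_def by simp
  qed
  have "(\<Sum>j<N. \<Sum>\<rho>\<in>?R. \<Sum>b<N - 1. infsum (\<lambda>k. (cmod (st U N (ys j \<rho> b) t k))\<^sup>2 * ind (invj N j k)) UNIV)
     \<le> (\<Sum>j<N. \<Sum>\<rho>\<in>?R. \<Sum>b<N - 1. (1::real))"
    by (intro sum_mono one)
  also have "\<dots> = real N * fact (N - 1) * real (N - 1)" by (cases N) (simp_all add: card_R)
  finally show ?thesis .
qed

lemma Wc_bound: "real (Suc n) * (harm (Suc n) - 1) \<le> (\<Sum>a<Suc n. \<Sum>b<n. wt a b)"
proof (induction n)
  case 0
  then show ?case by (simp add: harm_def)
next
  case (Suc n)
  have w1: "wt a n = 1 / (2 * real (n - a) + 1)" if "a < Suc n" for a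
    using that by (simp add: wt_def of_nat_diff)
  have w2: "wt (Suc n) b = 1 / (2 * real (n - b) + 1)" if "b < Suc n" for b
    using that by (simp add: wt_def of_nat_diff)
  have split: "(\<Sum>a<Suc (Suc n). \<Sum>b<Suc n. wt a b)
     = (\<Sum>a<Suc n. \<Sum>b<n. wt a b) + (\<Sum>a<Suc n. wt a n) + (\<Sum>b<Suc n. wt (Suc n) b)"
    by (simp add: sum.distrib)
  have inc: "harm (Suc n) \<le> (\<Sum>a<Suc n. wt a n) + (\<Sum>b<Suc n. wt (Suc n) b)"
  proof -
    have "(\<Sum>a<Suc n. wt a n) + (\<Sum>b<Suc n. wt (Suc n) b) = (\<Sum>a<Suc n. 2 / (2 * real (n - a) + 1))"
    proof -
      have "(\<Sum>a<Suc n. wt a n) = (\<Sum>a<Suc n. 1 / (2 * real (n - a) + 1))" by (rule sum.cong[OF refl]) (simp add: w1)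
      moreover have "(\<Sum>b<Suc n. wt (Suc n) b) = (\<Sum>a<Suc n. 1 / (2 * real (n - a) + 1))" by (rule sum.cong[OF refl]) (simp add: w2)
      moreover have "(\<Sum>a<Suc n. 1 / (2 * real (n - a) + 1)) + (\<Sum>a<Suc n. 1 / (2 * real (n - a) + 1))
          = (\<Sum>a<Suc n. 2 / (2 * real (n - a) + 1))" by (simp only: sum.distrib[symmetric]) (rule sum.cong, auto)
      ultimately show ?thesis by simp
    qed
    also have "\<dots> \<ge> (\<Sum>a<Suc n. 1 / (real (n - a) + 1))"
      by (rule sum_mono) (simp add: field_simps)
    also have "(\<Sum>a<Suc n. 1 / (real (n - a) + 1)) = (\<Sum>a<Suc n. 1 / (real a + 1))"
      using sum.nat_diff_reindex[of "\<lambda>a. 1 / (real a + 1)" "Suc n"] by simp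
    also have "\<dots> = harm (Suc n)" by (simp add: harm_altdef field_simps)
    finally show ?thesis by simp
  qed
  have "real (Suc (Suc n)) * (harm (Suc (Suc n)) - 1) = real (Suc n) * (harm (Suc n) - 1) + harm (Suc n)"
    unfolding harm_Suc[of "Suc n"] by (simp add: field_simps)
  then show ?case using Suc split inc by linarith
qed



lemma Kc_bound: "sqrt 2 * Kc \<le> pi"
proof -
  have p3: "3 < pi" by (rule pi_gt3)
  have "(pi + 1)\<^sup>2 \<le> 2 * pi\<^sup>2"
  proof -
    have "pi * (pi - 2) \<ge> 3 * 1" using p3 by (intro mult_mono) auto
    then show ?thesis by (simp add: power2_eq_square algebra_simps)
  qed
  then have "sqrt ((pi + 1)\<^sup>2) \<le> sqrt (2 * pi\<^sup>2)" by (rule real_sqrt_le_mono)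
  then have "pi + 1 \<le> sqrt 2 * pi" using p3 by (simp add: real_sqrt_mult)
  then have "sqrt 2 * (pi + 1) \<le> sqrt 2 * (sqrt 2 * pi)" by (rule mult_left_mono) simp
  also have "\<dots> = 2 * pi" by (simp add: mult.assoc[symmetric])
  finally have "sqrt 2 * (pi + 1) \<le> 2 * pi" .
  moreover have "sqrt 2 * Kc = sqrt 2 * (pi + 1) / 2" unfolding Kc_def by (simp add: field_simps)
  ultimately show ?thesis by linarith
qed

lemma per_t:
  assumes U: "unitary_op U" and l: "0 < l"
  shows "(\<Sum>j<N. \<Sum>\<rho>\<in>{\<rho>. \<rho> permutes {..<N - 1}}. \<Sum>a<N. \<Sum>b<N - 1.
            wt a b * Delta U N (xs N j \<rho> a) (ys j \<rho> b) t)
     \<le> l * Kc / 2 * (2 * fact N) + Kc / l / 2 * (real N * fact (N - 1) * real (N - 1))"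
proof -
  let ?R = "{\<rho>. \<rho> permutes {..<N - 1}}"
  define XA where "XA j \<rho> = (\<Sum>a<N. infsum (\<lambda>k. (cmod (st U N (xs N j \<rho> a) t k))\<^sup>2 * ind (invj N j k)) UNIV)" for j \<rho>
  define YB where "YB j \<rho> = (\<Sum>b<N - 1. infsum (\<lambda>k. (cmod (st U N (ys j \<rho> b) t k))\<^sup>2 * ind (invj N j k)) UNIV)" for j \<rho>
  have Kc0: "0 \<le> Kc" unfolding Kc_def using pi_gt_zero by simp
  have "(\<Sum>j<N. \<Sum>\<rho>\<in>?R. \<Sum>a<N. \<Sum>b<N - 1. wt a b * Delta U N (xs N j \<rho> a) (ys j \<rho> b) t)
      \<le> (\<Sum>j<N. \<Sum>\<rho>\<in>?R. l * Kc / 2 * XA j \<rho> + Kc / l / 2 * YB j \<rho>)"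
    unfolding XA_def YB_def by (intro sum_mono schur_jr[OF U _ l]) simp
  also have "\<dots> = l * Kc / 2 * (\<Sum>j<N. \<Sum>\<rho>\<in>?R. XA j \<rho>) + Kc / l / 2 * (\<Sum>j<N. \<Sum>\<rho>\<in>?R. YB j \<rho>)"
    by (simp add: sum.distrib sum_distrib_left)
  also have "\<dots> \<le> l * Kc / 2 * (2 * fact N) + Kc / l / 2 * (real N * fact (N - 1) * real (N - 1))"
    unfolding XA_def YB_def
    by (intro add_mono mult_left_mono xside[OF U] yside[OF U]) (use l Kc0 in auto)
  finally show ?thesis .
qed

theorem theorem3:
  fixes N T :: nat and \<epsilon> :: real and U :: "qstate \<Rightarrow> qstate" and out :: "label \<Rightarrow> bool"
  assumes "N \<ge> 1" and "0 \<le> \<epsilon>" and "\<epsilon> < 1/2"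
    and "ED_algorithm N \<epsilon> U out T"
  shows "real T \<ge> (1 - 2 * sqrt (\<epsilon> * (1 - \<epsilon>))) * (sqrt (real N) / (2 * pi)) * (harm N - 1)"
proof -
  have U: "unitary_op U" using assms(4) unfolding ED_algorithm_def by simp
  show ?thesis
  proof (cases "N = 1")
    case True
    then show ?thesis by (simp add: harm_def)
  next
    case False
    then have N2: "2 \<le> N" using assms(1) by simp
    let ?R = "{\<rho>. \<rho> permutes {..<N - 1}}"
    define l where "l = sqrt ((real N - 1) / 2)"
    have l0: "0 < l" using N2 by (simp add: l_def)
    have l2: "l\<^sup>2 = (real N - 1) / 2" using N2 by (simp add: l_def)
    define de where "de = 2 - 4 * sqrt (\<epsilon> * (1 - \<epsilon>))"
    define Wc where "Wc = (\<Sum>a<N. \<Sum>b<N - 1. wt a b)"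
    define S where "S t = (\<Sum>j<N. \<Sum>\<rho>\<in>?R. \<Sum>a<N. \<Sum>b<N - 1. wt a b * Delta U N (xs N j \<rho> a) (ys j \<rho> b) t)" for t
    have edge: "de \<le> 4 * (\<Sum>t<T. Delta U N (xs N j \<rho> a) (ys j \<rho> b) t)"
      if "j < N" "\<rho> \<in> ?R" "a < N" "b < N - 1" for j \<rho> a b
    proof -
      have "de \<le> norm2 (\<lambda>k. st U N (xs N j \<rho> a) T k - st U N (ys j \<rho> b) T k)"
        unfolding de_def using that
        by (intro final_dist[OF U assms(4) xs_distinct ys_not_distinct assms(2,3)]) auto
      also have "\<dots> \<le> 4 * (\<Sum>t<T. Delta U N (xs N j \<rho> a) (ys j \<rho> b) t)" by (rule dist_bound[OF U])
      finally show ?thesis .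
    qed
    have fN: "fact N = real N * fact (N - 1)"
      using N2 by (cases N) (simp_all add: fact_Suc)
    have LHS: "(\<Sum>j<N. \<Sum>\<rho>\<in>?R. \<Sum>a<N. \<Sum>b<N - 1. wt a b * de) = fact N * (de * Wc)"
    proof -
      have "(\<Sum>a<N. \<Sum>b<N - 1. wt a b * de) = de * Wc" unfolding Wc_def
        by (simp add: sum_distrib_left sum_distrib_right mult.commute)
      then show ?thesis using fN by (simp add: card_R)
    qed
    have mid: "(\<Sum>j<N. \<Sum>\<rho>\<in>?R. \<Sum>a<N. \<Sum>b<N - 1. wt a b * de)
        \<le> (\<Sum>j<N. \<Sum>\<rho>\<in>?R. \<Sum>a<N. \<Sum>b<N - 1. wt a b * (4 * (\<Sum>t<T. Delta U N (xs N j \<rho> a) (ys j \<rho> b) t)))"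
      by (intro sum_mono mult_left_mono edge wt_nonneg) auto
    have swap: "(\<Sum>j<N. \<Sum>\<rho>\<in>?R. \<Sum>a<N. \<Sum>b<N - 1. wt a b * (4 * (\<Sum>t<T. Delta U N (xs N j \<rho> a) (ys j \<rho> b) t)))
        = 4 * (\<Sum>t<T. S t)"
      unfolding S_def by (simp add: sum_distrib_left sum.swap[of _ "{..<T}"] mult.left_commute)
    have B: "S t \<le> 2 * l * Kc * fact N" for t
    proof -
      have "S t \<le> l * Kc / 2 * (2 * fact N) + Kc / l / 2 * (real N * fact (N - 1) * real (N - 1))"
        unfolding S_def by (rule per_t[OF U l0])
      also have "real (N - 1) = 2 * l\<^sup>2" using l2 N2 by (simp add: of_nat_diff)
      also have "l * Kc / 2 * (2 * fact N) + Kc / l / 2 * (real N * fact (N - 1) * (2 * l\<^sup>2)) = 2 * l * Kc * fact N"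
        using l0 fN by (simp add: power2_eq_square field_simps)
      finally show ?thesis .
    qed
    have sumB: "(\<Sum>t<T. S t) \<le> real T * (2 * l * Kc * fact N)"
      using sum_mono[of "{..<T}" S "\<lambda>_. 2 * l * Kc * fact N"] B by simp
    have main: "fact N * (de * Wc) \<le> fact N * (8 * real T * l * Kc)"
    proof -
      have "fact N * (de * Wc) \<le> 4 * (\<Sum>t<T. S t)" using LHS mid swap by linarith
      also have "\<dots> \<le> 4 * (real T * (2 * l * Kc * fact N))" using sumB by linarith
      also have "\<dots> = fact N * (8 * real T * l * Kc)" by (simp add: algebra_simps)
      finally show ?thesis .
    qed
    have fpos: "0 < (fact N :: real)" by simp
    have main2: "de * Wc \<le> 8 * real T * l * Kc" using main fpos by simp
    have Wcb: "real N * (harm N - 1) \<le> Wc"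
      using Wc_bound[of "N - 1"] N2 unfolding Wc_def by (simp add: Suc_diff_1)
    have de0: "0 \<le> de"
    proof -
      have "\<epsilon> * (1 - \<epsilon>) \<le> 1/4"
      proof -
        have "0 \<le> (\<epsilon> - 1/2)\<^sup>2" by simp
        then show ?thesis by (simp add: power2_eq_square algebra_simps)
      qed
      then have "sqrt (\<epsilon> * (1 - \<epsilon>)) \<le> sqrt (1/4)" by (rule real_sqrt_le_mono)
      then have "sqrt (\<epsilon> * (1 - \<epsilon>)) \<le> 1/2" by (simp add: real_sqrt_divide)
      then show ?thesis unfolding de_def by simp
    qed
    have H1: "0 \<le> (harm N :: real) - 1"
    proof -
      have "harm 1 \<le> (harm N :: real)" using assms(1) by (rule harm_mono)
      then show ?thesis by (simp add: harm_def)
    qed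
    define Z where "Z = (1 - 2 * sqrt (\<epsilon> * (1 - \<epsilon>))) * (harm N - 1)"
    have Z0: "0 \<le> Z" unfolding Z_def using de0 H1 unfolding de_def by simp
    have ZN: "Z * real N \<le> 4 * real T * l * Kc"
    proof -
      have "de * (real N * (harm N - 1)) \<le> de * Wc" by (rule mult_left_mono[OF Wcb de0])
      then have "de * (real N * (harm N - 1)) \<le> 8 * real T * l * Kc" using main2 by linarith
      moreover have "de * (real N * (harm N - 1)) = 2 * (Z * real N)" unfolding de_def Z_def by (simp add: algebra_simps)
      ultimately have "Z * real N \<le> 4 * (Kc * (l * real T))" by simp
      then show ?thesis by (simp add: mult_ac)
    qed
    have lN: "sqrt 2 * l \<le> sqrt (real N)"
    proof -
      have "sqrt 2 * l = sqrt (real N - 1)" unfolding l_def using N2 by (simp add: real_sqrt_mult[symmetric])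
      also have "\<dots> \<le> sqrt (real N)" by simp
      finally show ?thesis .
    qed
    have "4 * l * Kc \<le> 2 * pi * sqrt (real N)"
    proof -
      have "4 * l * Kc = 2 * (sqrt 2 * l) * (sqrt 2 * Kc)" by (simp add: algebra_simps)
      also have "\<dots> \<le> 2 * sqrt (real N) * pi"
        using lN Kc_bound l0 unfolding Kc_def by (intro mult_mono) (auto simp: pi_gt_zero add_pos_nonneg)
      finally show ?thesis by simp
    qed
    then have "real T * (4 * l * Kc) \<le> real T * (2 * pi * sqrt (real N))"
      by (rule mult_left_mono) simp
    moreover have "4 * real T * l * Kc = real T * (4 * l * Kc)" by (simp add: mult_ac)
    ultimately have "Z * real N \<le> real T * (2 * pi * sqrt (real N))"
      using ZN by linarith
    moreover have "real N = sqrt (real N) * sqrt (real N)" by simp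
    ultimately have "Z * sqrt (real N) * sqrt (real N) \<le> (real T * (2 * pi)) * sqrt (real N)"
      by (simp add: algebra_simps)
    then have "Z * sqrt (real N) \<le> real T * (2 * pi)"
      using N2 by (simp add: mult_le_cancel_right)
    then have "Z * sqrt (real N) / (2 * pi) \<le> real T" using pi_gt_zero by (simp add: field_simps)
    then show ?thesis unfolding Z_def by (simp add: field_simps)
  qed
qed


end
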